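(* Let $\varepsilon \geq \gamma > 0$, and let $H$ be an $n$-vertex $k$-graph with $\delta_{k-1}(H) \geq (1/3 + \varepsilon) n$. Let $G$ be the $\gamma$-diamond graph of $H$. Then the independence number of $G$ satisfies $\alpha(G) \leq 2$.
   Context: $k \geq 2$. $\delta_{k-1}(H)$ is the minimum over $(k-1)$-subsets $S \subseteq V(H)$ of the number of edges containing $S$. For $x, y \in V(H)$, an $(x,y)$-diamond is a pair of edges $e, f$ of $H$ with $|e \cap f| = k-1$, $x \in e\setminus f$, $y \in f \setminus e$. The $\gamma$-diamond graph of an $n$-vertex $k$-graph $H$ is the graph $G$ on $V(H)$ with $xy \in E(G)$ if and only if $H$ contains at least $\gamma\binom{n}{k-1}$ distinct $(x,y)$-diamonds. *)

theory Defs
  imports Complex_Main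
begin

definition kgraph :: "nat \<Rightarrow> 'a set \<Rightarrow> 'a set set \<Rightarrow> bool" where
  "kgraph k V E \<longleftrightarrow> finite V \<and> (\<forall>e\<in>E. e \<subseteq> V \<and> card e = k)"

definition min_codegree :: "nat \<Rightarrow> 'a set \<Rightarrow> 'a set set \<Rightarrow> nat" where
  "min_codegree k V E = Min ((\<lambda>S. card {e\<in>E. S \<subseteq> e}) ` {S. S \<subseteq> V \<and> card S = k - 1})"

definition diamonds :: "nat \<Rightarrow> 'a set set \<Rightarrow> 'a \<Rightarrow> 'a \<Rightarrow> ('a set \<times> 'a set) set" where
  "diamonds k E x y = {(e, f). e \<in> E \<and> f \<in> E \<and> card (e \<inter> f) = k - 1 \<and> x \<in> e - f \<and> y \<in> f - e}"

definition diamond_adj :: "real \<Rightarrow> nat \<Rightarrow> 'a set \<Rightarrow> 'a set set \<Rightarrow> 'a \<Rightarrow> 'a \<Rightarrow> bool" where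
  "diamond_adj \<gamma> k V E x y \<longleftrightarrow> x \<in> V \<and> y \<in> V \<and>
     real (card (diamonds k E x y)) \<ge> \<gamma> * real (card V choose (k - 1))"

definition independent_set :: "'a set \<Rightarrow> ('a \<Rightarrow> 'a \<Rightarrow> bool) \<Rightarrow> 'a set \<Rightarrow> bool" where
  "independent_set V adj I \<longleftrightarrow> I \<subseteq> V \<and> (\<forall>x\<in>I. \<forall>y\<in>I. x \<noteq> y \<longrightarrow> \<not> adj x y)"

end

theory Submission
  imports Defs
begin

definition Lk :: "nat \<Rightarrow> 'a set \<Rightarrow> 'a set set \<Rightarrow> 'a \<Rightarrow> 'a set set" where
  "Lk k V E x = {S. S \<subseteq> V \<and> card S = k - 1 \<and> x \<notin> S \<and> insert x S \<in> E}"

lemma finE: assumes "kgraph k V E" shows "finite E"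
proof -
  have "E \<subseteq> Pow V" using assms by (auto simp: kgraph_def)
  moreover have "finite V" using assms by (auto simp: kgraph_def)
  ultimately show ?thesis by (meson finite_Pow_iff rev_finite_subset)
qed

lemma finLk: assumes "kgraph k V E" shows "finite (Lk k V E x)"
proof -
  have "Lk k V E x \<subseteq> Pow V" by (auto simp: Lk_def)
  moreover have "finite V" using assms by (auto simp: kgraph_def)
  ultimately show ?thesis by (meson finite_Pow_iff rev_finite_subset)
qed

lemma diam_le:
  assumes "x \<noteq> y" "kgraph k V E"
  shows "card (Lk k V E x \<inter> Lk k V E y) \<le> card (diamonds k E x y)"
proof -
  have fin: "finite (diamonds k E x y)"
    using finE[OF assms(2)] by (rule_tac finite_subset[of _ "E \<times> E"]) (auto simp: diamonds_def)
  have inj: "inj_on (\<lambda>S. (insert x S, insert y S)) (Lk k V E x \<inter> Lk k V E y)"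
  proof (rule inj_onI)
    fix S T assume "S \<in> Lk k V E x \<inter> Lk k V E y" "T \<in> Lk k V E x \<inter> Lk k V E y"
      "(insert x S, insert y S) = (insert x T, insert y T)"
    then show "S = T" unfolding Lk_def by (metis (mono_tags, lifting) Int_iff mem_Collect_eq insert_ident prod.inject)
  qed
  have img: "(\<lambda>S. (insert x S, insert y S)) ` (Lk k V E x \<inter> Lk k V E y) \<subseteq> diamonds k E x y"
  proof
    fix p assume "p \<in> (\<lambda>S. (insert x S, insert y S)) ` (Lk k V E x \<inter> Lk k V E y)"
    then obtain S where S: "S \<in> Lk k V E x \<inter> Lk k V E y" "p = (insert x S, insert y S)" by auto
    have "insert x S \<inter> insert y S = S" using S(1) assms(1) by (auto simp: Lk_def)
    then show "p \<in> diamonds k E x y" using S assms(1) by (auto simp: Lk_def diamonds_def)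
  qed
  show ?thesis using card_inj_on_le[OF inj img fin] .
qed

lemma deg_bound:
  assumes k2: "k \<ge> 2" and kg: "kgraph k V E" and xV: "x \<in> V"
    and dS: "\<And>S. S \<subseteq> V \<Longrightarrow> card S = k - 1 \<Longrightarrow> d \<le> card {e\<in>E. S \<subseteq> e}"
  shows "((card V - 1) choose (k - 2)) * d \<le> (k - 1) * card (Lk k V E x)"
proof -
  have finV: "finite V" using kg by (auto simp: kgraph_def)
  define G where "G = {T. T \<subseteq> V - {x} \<and> card T = k - 2}"
  define L where "L = Lk k V E x"
  have finG: "finite G" unfolding G_def using finV by auto
  have finL: "finite L" unfolding L_def using finLk[OF kg] .
  have cG: "card G = (card V - 1) choose (k - 2)"
    unfolding G_def using n_subsets[of "V - {x}" "k-2"] finV xV by auto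
  have sw: "(\<Sum>T\<in>G. card {S\<in>L. T \<subseteq> S}) = (\<Sum>S\<in>L. card {T\<in>G. T \<subseteq> S})"
  proof -
    have "(\<Sum>T\<in>G. card {S\<in>L. T \<subseteq> S}) = (\<Sum>T\<in>G. \<Sum>S\<in>L. if T \<subseteq> S then 1 else 0)"
      using finL by (simp add: sum.inter_filter[symmetric])
    also have "\<dots> = (\<Sum>S\<in>L. \<Sum>T\<in>G. if T \<subseteq> S then 1 else 0)" by (rule sum.swap)
    also have "\<dots> = (\<Sum>S\<in>L. card {T\<in>G. T \<subseteq> S})"
      using finG by (simp add: sum.inter_filter[symmetric])
    finally show ?thesis .
  qed
  have r: "card {T\<in>G. T \<subseteq> S} = k - 1" if "S \<in> L" for S
  proof -
    have S: "S \<subseteq> V" "x \<notin> S" "card S = k - 1" using that by (auto simp: L_def Lk_def)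
    have "{T\<in>G. T \<subseteq> S} = {T. T \<subseteq> S \<and> card T = k - 2}" using S unfolding G_def by auto
    moreover have "finite S" using S finV finite_subset by auto
    ultimately have "card {T\<in>G. T \<subseteq> S} = (k - 1) choose (k - 2)" using n_subsets[of S "k-2"] S(3) by simp
    also have "\<dots> = k - 1"
    proof -
      obtain m where "k = m + 2" using k2 by (metis add.commute le_iff_add)
      then show ?thesis by (simp add: binomial_symmetric[of m "Suc m", simplified])
    qed
    finally show ?thesis .
  qed
  have l: "d \<le> card {S\<in>L. T \<subseteq> S}" if "T \<in> G" for T
  proof -
    have T: "T \<subseteq> V" "x \<notin> T" "card T = k - 2" using that by (auto simp: G_def)
    have fT: "finite T" using T finV finite_subset by auto
    have "card (insert x T) = k - 1" using T fT k2 by simp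
    then have "d \<le> card {e\<in>E. insert x T \<subseteq> e}" by (intro dS) (use T xV in auto)
    also have "\<dots> \<le> card {S\<in>L. T \<subseteq> S}"
    proof (rule card_inj_on_le[where f="\<lambda>e. e - {x}"])
      show "inj_on (\<lambda>e. e - {x}) {e \<in> E. insert x T \<subseteq> e}"
        by (rule inj_onI) (metis (no_types, lifting) insert_Diff insert_subset mem_Collect_eq)
      show "(\<lambda>e. e - {x}) ` {e \<in> E. insert x T \<subseteq> e} \<subseteq> {S \<in> L. T \<subseteq> S}"
      proof
        fix S assume "S \<in> (\<lambda>e. e - {x}) ` {e \<in> E. insert x T \<subseteq> e}"
        then obtain e where e: "e \<in> E" "insert x T \<subseteq> e" "S = e - {x}" by auto
        have "e \<subseteq> V" "card e = k" using e kg by (auto simp: kgraph_def)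
        moreover have "finite e" using \<open>e \<subseteq> V\<close> finV finite_subset by auto
        ultimately show "S \<in> {S \<in> L. T \<subseteq> S}" using e T
          by (auto simp: L_def Lk_def insert_absorb)
      qed
      show "finite {S \<in> L. T \<subseteq> S}" using finL by simp
    qed
    finally show ?thesis .
  qed
  have "card G * d = (\<Sum>T\<in>G. d)" by simp
  also have "\<dots> \<le> (\<Sum>T\<in>G. card {S\<in>L. T \<subseteq> S})" by (rule sum_mono) (rule l)
  also have "\<dots> = (\<Sum>S\<in>L. k - 1)" using sw r by simp
  also have "\<dots> = (k - 1) * card L" by simp
  finally show ?thesis using cG L_def by simp
qed

lemma incl_excl3:
  assumes "finite A" "finite B" "finite C"
  shows "card A + card B + card C \<le> card (A \<union> B \<union> C) + card (A \<inter> B) + card (A \<inter> C) + card (B \<inter> C)"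
proof -
  have 1: "card A + card B = card (A \<union> B) + card (A \<inter> B)" using card_Un_Int assms by blast
  have 2: "card (A \<union> B) + card C = card (A \<union> B \<union> C) + card ((A \<union> B) \<inter> C)"
    using card_Un_Int assms by (metis finite_UnI)
  have "(A \<union> B) \<inter> C = (A \<inter> C) \<union> (B \<inter> C)" by auto
  then have 3: "card ((A \<union> B) \<inter> C) \<le> card (A \<inter> C) + card (B \<inter> C)" by (simp add: card_Un_le)
  show ?thesis using 1 2 3 by linarith
qed

theorem lemma7p2:
  fixes k :: nat and V :: "'a set" and E :: "'a set set" and \<epsilon> \<gamma> :: real
  assumes "k \<ge> 2"
    and "kgraph k V E"
    and "k - 1 \<le> card V"
    and "\<epsilon> \<ge> \<gamma>" and "\<gamma> > 0"
    and "real (min_codegree k V E) \<ge> (1/3 + \<epsilon>) * real (card V)"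
  shows "\<forall>I. independent_set V (diamond_adj \<gamma> k V E) I \<longrightarrow> card I \<le> 2"
proof (intro allI impI)
  fix I assume ind: "independent_set V (diamond_adj \<gamma> k V E) I"
  show "card I \<le> 2"
  proof (rule ccontr)
    assume "\<not> card I \<le> 2"
    then have "3 \<le> card I" by simp
    then obtain x1 x2 x3 where xs: "x1 \<in> I" "x2 \<in> I" "x3 \<in> I" "x1 \<noteq> x2" "x1 \<noteq> x3" "x2 \<noteq> x3"
    proof -
      obtain J where J: "J \<subseteq> I" "card J = 3" using obtain_subset_with_card_n[OF \<open>3 \<le> card I\<close>] by metis
      then obtain a b c where "J = {a, b, c}" "a \<noteq> b" "b \<noteq> c" "a \<noteq> c" by (metis card_3_iff)
      then show ?thesis using that J(1) by blast
    qed
    have IV: "I \<subseteq> V" using ind by (auto simp: independent_set_def)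
    have finV: "finite V" using assms(2) by (auto simp: kgraph_def)
    define n where "n = card V"
    define M where "M = n choose (k - 1)"
    define d where "d = min_codegree k V E"
    define F where "F = {S. S \<subseteq> V \<and> card S = k - 1}"
    have finF: "finite F" unfolding F_def using finV by auto
    have cF: "card F = M" unfolding F_def M_def n_def using n_subsets finV by blast
    have dS: "d \<le> card {e\<in>E. S \<subseteq> e}" if "S \<subseteq> V" "card S = k - 1" for S
    proof -
      have m: "card {e\<in>E. S \<subseteq> e} \<in> (\<lambda>S. card {e\<in>E. S \<subseteq> e}) ` F" using that unfolding F_def by blast
      have "finite ((\<lambda>S. card {e\<in>E. S \<subseteq> e}) ` F)" using finF by blast
      from Min_le[OF this m] show ?thesis unfolding d_def min_codegree_def F_def .
    qed
    have n1: "n \<ge> 1" using IV xs(1) finV n_def card_0_eq by fastforce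
    have binid: "(k - 1) * M = n * ((n - 1) choose (k - 2))"
    proof -
      obtain m where km: "k = m + 2" using assms(1) by (metis add.commute le_iff_add)
      have "Suc m * (n choose Suc m) = n * ((n - 1) choose (Suc m - 1))"
        by (rule times_binomial_minus1_eq) simp
      then show ?thesis unfolding M_def km by simp
    qed
    have Lbound: "(1/3 + \<epsilon>) * real M \<le> real (card (Lk k V E x))" if "x \<in> V" for x
    proof -
      have h: "((n - 1) choose (k - 2)) * d \<le> (k - 1) * card (Lk k V E x)"
        using deg_bound[OF assms(1,2) that, of d] dS n_def by auto
      have "real (k - 1) * ((1/3 + \<epsilon>) * real M) = (1/3 + \<epsilon>) * real n * real ((n - 1) choose (k - 2))"
        using arg_cong[OF binid, of real] by (simp only: of_nat_mult) (simp add: algebra_simps)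
      also have "\<dots> \<le> real d * real ((n - 1) choose (k - 2))"
        using assms(6) d_def n_def by (intro mult_right_mono) auto
      also have "\<dots> \<le> real (k - 1) * real (card (Lk k V E x))"
        using h by (metis of_nat_mono of_nat_mult mult.commute)
      finally show ?thesis using assms(1) by (simp add: mult_le_cancel_left_pos)
    qed
    define L1 where "L1 = Lk k V E x1"
    define L2 where "L2 = Lk k V E x2"
    define L3 where "L3 = Lk k V E x3"
    have fins: "finite L1" "finite L2" "finite L3" unfolding L1_def L2_def L3_def
      using finLk[OF assms(2)] by auto
    have "L1 \<union> L2 \<union> L3 \<subseteq> F" unfolding L1_def L2_def L3_def F_def Lk_def by auto
    then have U: "card (L1 \<union> L2 \<union> L3) \<le> M" using cF finF card_mono by metis
    have IE: "card L1 + card L2 + card L3 \<le> card (L1 \<union> L2 \<union> L3) + card (L1 \<inter> L2) + card (L1 \<inter> L3) + card (L2 \<inter> L3)"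
      using incl_excl3[OF fins] .
    have b1: "(1/3 + \<epsilon>) * real M \<le> real (card L1)" using Lbound xs IV L1_def by auto
    have b2: "(1/3 + \<epsilon>) * real M \<le> real (card L2)" using Lbound xs IV L2_def by auto
    have b3: "(1/3 + \<epsilon>) * real M \<le> real (card L3)" using Lbound xs IV L3_def by auto
    have IEr: "real (card L1) + real (card L2) + real (card L3) \<le> real M + real (card (L1 \<inter> L2)) + real (card (L1 \<inter> L3)) + real (card (L2 \<inter> L3))"
      using IE U by linarith
    have "3 * (\<epsilon> * real M) \<le> real (card (L1 \<inter> L2)) + real (card (L1 \<inter> L3)) + real (card (L2 \<inter> L3))"
      using b1 b2 b3 IEr by (simp add: algebra_simps)
    moreover have "\<gamma> * real M \<le> \<epsilon> * real M" using assms(4) by (simp add: mult_right_mono)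
    ultimately have "\<gamma> * real M \<le> real (card (L1 \<inter> L2)) \<or> \<gamma> * real M \<le> real (card (L1 \<inter> L3)) \<or> \<gamma> * real M \<le> real (card (L2 \<inter> L3))"
      by linarith
    moreover have "card (L1 \<inter> L2) \<le> card (diamonds k E x1 x2)" unfolding L1_def L2_def using diam_le xs assms(2) by metis
    moreover have "card (L1 \<inter> L3) \<le> card (diamonds k E x1 x3)" unfolding L1_def L3_def using diam_le xs assms(2) by metis
    moreover have "card (L2 \<inter> L3) \<le> card (diamonds k E x2 x3)" unfolding L2_def L3_def using diam_le xs assms(2) by metis
    ultimately have "diamond_adj \<gamma> k V E x1 x2 \<or> diamond_adj \<gamma> k V E x1 x3 \<or> diamond_adj \<gamma> k V E x2 x3"
      unfolding diamond_adj_def M_def n_def using xs IV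
      by (smt (verit, ccfv_SIG) of_nat_le_iff subsetD)
    then show False using ind xs unfolding independent_set_def by blast
  qed
qed

end
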